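(* Realize $\mathrm{SO}(3)\times\mathbb{R}$ as the group of $4\times4$ matrices $(C,v)=\begin{pmatrix}C&0\\0&e^v\end{pmatrix}$, $C\in\mathrm{SO}(3)$, $v\in\mathbb{R}$, and let $E_1=e_{32}-e_{23}$, $E_2=e_{13}-e_{31}$, $E_3=e_{21}-e_{12}$, $E_4=e_{44}$ ($e_{jk}$ the $4\times4$ matrix units), $e_1=E_1$, $e_2=E_4$, $e_3=E_2$, $e_4=E_3$. For $\alpha_1^2+\alpha_2^2+\alpha_3^2=1$, $\beta\in\mathbb{R}$ let $$\gamma_2(t)=\gamma_2(\alpha_1,\alpha_2,\alpha_3,\beta;t)=\exp\bigl(t(\alpha_1e_1+\alpha_2e_2+\alpha_3e_3+\beta e_4)\bigr)\exp(-t\beta e_4)$$ (the arclength geodesics through $\mathrm{Id}$ of the left-invariant sub-Riemannian metric $\rho_2$ defined by $\mathrm{span}(e_1,e_2,e_3)$ with orthonormal basis $e_1,e_2,e_3$). Put $w_2=\sqrt{1-\alpha_2^2+\beta^2}$, $\mu_2=\frac{\sin w_2t}{w_2}$, $\nu_2=\frac{1-\cos w_2t}{w_2^2}$. If $\alpha_2\neq\pm1$, then $\gamma_2(t)=(C,v)(t)$ with $v(t)=\alpha_2t$ and the columns $C_1,C_2,C_3$ of $C(t)\in\mathrm{SO}(3)$ given by $$C_1=\begin{pmatrix}(1-\nu_2(\alpha_3^2+\beta^2))\cos\beta t-(\alpha_1\alpha_3\nu_2-\beta\mu_2)\sin\beta t\\ (\alpha_1\alpha_3\nu_2+\beta\mu_2)\cos\beta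 t-(1-\nu_2(\alpha_1^2+\beta^2))\sin\beta t\\ (\alpha_1\beta\nu_2-\alpha_3\mu_2)\cos\beta t-(\alpha_3\beta\nu_2+\alpha_1\mu_2)\sin\beta t\end{pmatrix},$$ $$C_2=\begin{pmatrix}(1-\nu_2(\alpha_3^2+\beta^2))\sin\beta t+(\alpha_1\alpha_3\nu_2-\beta\mu_2)\cos\beta t\\ (\alpha_1\alpha_3\nu_2+\beta\mu_2)\sin\beta t+(1-\nu_2(\alpha_1^2+\beta^2))\cos\beta t\\ (\alpha_1\beta\nu_2-\alpha_3\mu_2)\sin\beta t+(\alpha_3\beta\nu_2+\alpha_1\mu_2)\cos\beta t\end{pmatrix},\quad C_3=\begin{pmatrix}\alpha_1\beta\nu_2+\alpha_3\mu_2\\ \alpha_3\beta\nu_2-\alpha_1\mu_2\\ 1-\nu_2(\alpha_1^2+\alpha_3^2)\end{pmatrix}.$$ If $\alpha_2=\pm1$, then $\gamma_2(t)=(E,\alpha_2t)$, $t\in\mathbb{R}$, where $E$ is the $3\times3$ identity matrix.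
   Context: The matrices $E_1,\dots,E_4$ satisfy $[E_1,E_2]=E_3$, $[E_2,E_3]=E_1$, $[E_3,E_1]=E_2$, $[E_i,E_4]=0$. *)

theory Defs
  imports "HOL-Analysis.Analysis"
begin

text \<open>The index type 4 has the four elements 1,2,3 and 0 (numerals wrap mod 4);
  we identify them with the paper's row/column numbers 1,2,3,4 via idx.\<close>

definition idx :: "4 \<Rightarrow> nat" where
  "idx i = (if i = 1 then 1 else if i = 2 then 2 else if i = 3 then 3 else 4)"

definition munit :: "nat \<Rightarrow> nat \<Rightarrow> real^4^4" where
  "munit j k = (\<chi> a b. if idx a = j \<and> idx b = k then 1 else 0)"

fun mpow :: "real^4^4 \<Rightarrow> nat \<Rightarrow> real^4^4" where
  "mpow A 0 = mat 1"
| "mpow A (Suc n) = A ** mpow A n"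

definition mexp :: "real^4^4 \<Rightarrow> real^4^4" where
  "mexp A = (\<Sum>n. (1 / fact n) *\<^sub>R mpow A n)"

definition E1 :: "real^4^4" where "E1 = munit 3 2 - munit 2 3"
definition E2 :: "real^4^4" where "E2 = munit 1 3 - munit 3 1"
definition E3 :: "real^4^4" where "E3 = munit 2 1 - munit 1 2"
definition E4 :: "real^4^4" where "E4 = munit 4 4"

definition e1 :: "real^4^4" where "e1 = E1"
definition e2 :: "real^4^4" where "e2 = E4"
definition e3 :: "real^4^4" where "e3 = E2"
definition e4 :: "real^4^4" where "e4 = E3"

definition gamma2 :: "real \<Rightarrow> real \<Rightarrow> real \<Rightarrow> real \<Rightarrow> real \<Rightarrow> real^4^4" where
  "gamma2 a1 a2 a3 b t =
     mexp (t *\<^sub>R (a1 *\<^sub>R e1 + a2 *\<^sub>R e2 + a3 *\<^sub>R e3 + b *\<^sub>R e4)) ** mexp ((- t * b) *\<^sub>R e4)"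

definition blk :: "(nat \<Rightarrow> nat \<Rightarrow> real) \<Rightarrow> real \<Rightarrow> real^4^4" where
  "blk C v = (\<chi> a b. if idx a = 4 \<and> idx b = 4 then exp v
                      else if idx a = 4 \<or> idx b = 4 then 0
                      else C (idx a) (idx b))"

definition w2 :: "real \<Rightarrow> real \<Rightarrow> real" where
  "w2 a2 b = sqrt (1 - a2^2 + b^2)"
definition mu2 :: "real \<Rightarrow> real \<Rightarrow> real \<Rightarrow> real" where
  "mu2 a2 b t = sin (w2 a2 b * t) / w2 a2 b"
definition nu2 :: "real \<Rightarrow> real \<Rightarrow> real \<Rightarrow> real" where
  "nu2 a2 b t = (1 - cos (w2 a2 b * t)) / (w2 a2 b)^2"

text \<open>The matrix C(t): entry (i,k) is the i-th component of column C_k.\<close>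
definition Cmat :: "real \<Rightarrow> real \<Rightarrow> real \<Rightarrow> real \<Rightarrow> real \<Rightarrow> nat \<Rightarrow> nat \<Rightarrow> real" where
  "Cmat a1 a2 a3 b t i k =
    (let mu = mu2 a2 b t; nu = nu2 a2 b t; c = cos (b * t); s = sin (b * t) in
     if k = 1 then
       (if i = 1 then (1 - nu * (a3^2 + b^2)) * c - (a1 * a3 * nu - b * mu) * s
        else if i = 2 then (a1 * a3 * nu + b * mu) * c - (1 - nu * (a1^2 + b^2)) * s
        else (a1 * b * nu - a3 * mu) * c - (a3 * b * nu + a1 * mu) * s)
     else if k = 2 then
       (if i = 1 then (1 - nu * (a3^2 + b^2)) * s + (a1 * a3 * nu - b * mu) * c
        else if i = 2 then (a1 * a3 * nu + b * mu) * s + (1 - nu * (a1^2 + b^2)) * c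
        else (a1 * b * nu - a3 * mu) * s + (a3 * b * nu + a1 * mu) * c)
     else
       (if i = 1 then a1 * b * nu + a3 * mu
        else if i = 2 then a3 * b * nu - a1 * mu
        else 1 - nu * (a1^2 + a3^2)))"

definition Id3 :: "nat \<Rightarrow> nat \<Rightarrow> real" where
  "Id3 i k = (if i = k then 1 else 0)"

end

theory Submission
  imports Defs
begin

lemma matrix_add_rdistrib: "((B + C) ** A) = (B ** A) + (C ** A)"
  for A B C :: "real^'n^'n"
  by (vector matrix_matrix_mult_def sum.distrib[symmetric] field_simps)

lemma mpow_add: "mpow A (m + n) = mpow A m ** mpow A n"
  by (induction m) (simp_all add: matrix_mul_assoc)

lemma mpow3: "mpow A 3 = A ** (A ** A)"
  by (simp add: numeral_3_eq_3)

lemma mpow_rec3: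
  assumes "Y ** (Y ** Y) = c *\<^sub>R Y"
  shows "mpow Y (n + 3) = c *\<^sub>R mpow Y (Suc n)"
proof -
  have "mpow Y (n + 3) = mpow Y 3 ** mpow Y n" using mpow_add[of Y 3 n] by (simp add: add.commute)
  also have "\<dots> = c *\<^sub>R (Y ** mpow Y n)" by (simp add: mpow3 assms scalar_matrix_assoc)
  finally show ?thesis by simp
qed

lemma mpow_odd:
  assumes "Y ** (Y ** Y) = c *\<^sub>R Y"
  shows "mpow Y (2*k+1) = c^k *\<^sub>R Y \<and> mpow Y (2*k+2) = c^k *\<^sub>R (Y ** Y)"
proof (induction k)
  case 0 then show ?case by (simp add: numeral_2_eq_2)
next
  case (Suc k)
  have a: "2 * Suc k + 1 = (2*k) + 3" and b: "2 * Suc k + 2 = Suc (2*k) + 3" by simp_all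
  show ?case unfolding a b mpow_rec3[OF assms]
    using Suc by (simp add: numeral_2_eq_2 matrix_scalar_ac scalar_matrix_assoc[symmetric])
qed

lemma mpow_E:
  assumes "E ** E = E"
  shows "mpow (c *\<^sub>R E) (Suc n) = c^(Suc n) *\<^sub>R E"
  by (induction n) (simp_all add: assms matrix_scalar_ac scalar_matrix_assoc[symmetric])

lemma mpow_sum:
  assumes "P ** Q = 0" "Q ** P = 0"
  shows "mpow (P + Q) (Suc n) = mpow P (Suc n) + mpow Q (Suc n)"
proof (induction n)
  case 0 then show ?case by simp
next
  case (Suc n)
  have "mpow (P + Q) (Suc (Suc n)) = (P + Q) ** (mpow P (Suc n) + mpow Q (Suc n))"
    using Suc by simp
  also have "\<dots> = P ** mpow P (Suc n) + P ** (Q ** mpow Q n) + Q ** (P ** mpow P n) + Q ** mpow Q (Suc n)"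
    by (simp add: matrix_add_ldistrib matrix_add_rdistrib)
  also have "\<dots> = mpow P (Suc (Suc n)) + mpow Q (Suc (Suc n))"
    by (simp add: matrix_mul_assoc assms)
  finally show ?case .
qed

lemma mexp_main:
  assumes Y3: "Y ** (Y ** Y) = (-(s^2)) *\<^sub>R Y" and s: "s \<noteq> 0"
    and EE: "E ** E = E" and YE: "Y ** E = 0" and EY: "E ** Y = 0"
  shows "mexp (Y + c *\<^sub>R E) = mat 1 + (sin s / s) *\<^sub>R Y + ((1 - cos s)/s^2) *\<^sub>R (Y ** Y)
           + (exp c - 1) *\<^sub>R E"
proof -
  define f0 :: "nat \<Rightarrow> real" where "f0 n = (if n = 0 then 1 else 0)" for n
  define f1 where "f1 = (\<lambda>n. sin_coeff n * s^n / s)"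
  define f2 where "f2 = (\<lambda>n. (f0 n - cos_coeff n * s^n) / s^2)"
  define f3 where "f3 = (\<lambda>n. c^n / fact n - f0 n)"
  have sq: "(-(s^2))^k = (-1)^k * s^(2*k)" for k
    by (subst power_minus) (simp add: power_mult)
  have pt: "(1 / fact n) *\<^sub>R mpow (Y + c *\<^sub>R E) n
      = f0 n *\<^sub>R mat 1 + f1 n *\<^sub>R Y + f2 n *\<^sub>R (Y ** Y) + f3 n *\<^sub>R E" for n
  proof (cases n)
    case 0 then show ?thesis by (simp add: f0_def f1_def f2_def f3_def)
  next
    case (Suc m)
    have PQ: "Y ** (c *\<^sub>R E) = 0" "(c *\<^sub>R E) ** Y = 0"
      by (simp_all add: matrix_scalar_ac scalar_matrix_assoc[symmetric] YE EY)
    have mp: "mpow (Y + c *\<^sub>R E) n = mpow Y n + c^n *\<^sub>R E"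
      using mpow_sum[OF PQ, of m] mpow_E[OF EE, of c m] Suc by simp
    obtain k where "n = 2*k+1 \<or> n = 2*k+2"
    proof (cases "even m")
      case True then obtain k where "m = 2*k" by (auto elim!: evenE)
      then show ?thesis using that[of k] Suc by simp
    next
      case False then obtain k where "m = 2*k+1" by (auto elim!: oddE)
      then show ?thesis using that[of k] Suc by simp
    qed
    then show ?thesis
    proof (elim disjE)
      assume 1: "n = 2*k+1"
      have m1: "mpow Y n = (-(s^2))^k *\<^sub>R Y" unfolding 1 using mpow_odd[OF Y3, of k] by blast
      have a: "f1 n = (1 / fact n) * (-(s^2))^k"
        using s by (simp add: f1_def sin_coeff_def 1 sq power_add)
      have b: "f2 n = 0" by (simp add: f2_def f0_def cos_coeff_def 1)
      have c: "f3 n = (1 / fact n) * c^n" by (simp add: f3_def f0_def 1)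
      show ?thesis unfolding mp m1 a b c by (simp add: f0_def 1 scaleR_add_right)
    next
      assume 2: "n = 2*k+2"
      have m1: "mpow Y n = (-(s^2))^k *\<^sub>R (Y ** Y)" unfolding 2 using mpow_odd[OF Y3, of k] by blast
      have cc: "cos_coeff n = (-1)^(k+1) / fact n" by (simp add: cos_coeff_def 2)
      have sp: "s^n = s^2 * s^(2*k)" unfolding 2 by (simp add: power_add power2_eq_square)
      have f0n: "f0 n = 0" by (simp add: f0_def 2)
      have a: "f2 n = (1 / fact n) * (-(s^2))^k"
        unfolding f2_def f0n cc sp sq using s by simp
      have b: "f1 n = 0" by (simp add: f1_def sin_coeff_def 2)
      have c: "f3 n = (1 / fact n) * c^n" by (simp add: f3_def f0_def 2)
      show ?thesis unfolding mp m1 a b c by (simp add: f0_def 2 scaleR_add_right)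
    qed
  qed
  have f0e: "f0 = (\<lambda>r. if r = 0 then 1 else 0)" by (simp add: fun_eq_iff f0_def)
  have s0: "f0 sums 1" unfolding f0e using sums_single[of 0 "\<lambda>_. 1::real"] by simp
  have s1: "f1 sums (sin s / s)"
    using sums_divide[OF sin_converges[of s], of s] by (simp add: f1_def)
  have s2: "f2 sums ((1 - cos s) / s^2)"
    using sums_divide[OF sums_diff[OF s0 cos_converges[of s]], of "s^2"] by (simp add: f2_def)
  have s3: "f3 sums (exp c - 1)"
    using sums_diff[OF exp_converges[of c] s0] by (simp add: f3_def divide_inverse mult.commute)
  have "(\<lambda>n. f0 n *\<^sub>R mat 1 + f1 n *\<^sub>R Y + f2 n *\<^sub>R (Y ** Y) + f3 n *\<^sub>R E) sums
        (1 *\<^sub>R (mat 1 :: real^4^4) + (sin s / s) *\<^sub>R Y + ((1 - cos s)/s^2) *\<^sub>R (Y ** Y) + (exp c - 1) *\<^sub>R E)"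
    by (intro sums_add sums_scaleR_left s0 s1 s2 s3)
  then have "(\<lambda>n. (1 / fact n) *\<^sub>R mpow (Y + c *\<^sub>R E) n) sums
        (mat 1 + (sin s / s) *\<^sub>R Y + ((1 - cos s)/s^2) *\<^sub>R (Y ** Y) + (exp c - 1) *\<^sub>R E)"
    unfolding pt by simp
  then show ?thesis unfolding mexp_def by (rule sums_unique[symmetric])
qed

definition mk :: "(nat \<Rightarrow> nat \<Rightarrow> real) \<Rightarrow> real^4^4" where
  "mk f = (\<chi> a b. f (idx a) (idx b))"

lemma idx_simps[simp]: "idx 1 = 1" "idx 2 = 2" "idx 3 = 3" "idx 4 = 4"
  by (simp_all add: idx_def)

lemma idx_inj: "idx a = idx b \<longleftrightarrow> a = b"
  using exhaust_4[of a] exhaust_4[of b] by auto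

lemma mk_mult: "mk f ** mk g = mk (\<lambda>i j. f i 1 * g 1 j + f i 2 * g 2 j + f i 3 * g 3 j + f i 4 * g 4 j)"
  by (simp add: matrix_matrix_mult_def mk_def vec_eq_iff sum_4)

lemma mk_add: "mk f + mk g = mk (\<lambda>i j. f i j + g i j)"
  by (simp add: mk_def vec_eq_iff)
lemma mk_diff: "mk f - mk g = mk (\<lambda>i j. f i j - g i j)"
  by (simp add: mk_def vec_eq_iff)
lemma mk_scale: "c *\<^sub>R mk f = mk (\<lambda>i j. c * f i j)"
  by (simp add: mk_def vec_eq_iff)
lemma mk_mat1: "mat 1 = mk (\<lambda>i j. if i = j then 1 else 0)"
  by (simp add: mk_def vec_eq_iff mat_def idx_inj)
lemma mk_zero: "0 = mk (\<lambda>i j. 0)"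
  by (simp add: mk_def vec_eq_iff)
lemma munit_mk: "munit j k = mk (\<lambda>a b. if a = j \<and> b = k then 1 else 0)"
  by (simp add: mk_def munit_def)
lemma blk_mk: "blk C v = mk (\<lambda>a b. if a = 4 \<and> b = 4 then exp v
                      else if a = 4 \<or> b = 4 then 0 else C a b)"
  by (simp add: mk_def blk_def)
lemma mk_eq_iff: "mk f = mk g \<longleftrightarrow> (\<forall>i\<in>{1,2,3,4}. \<forall>j\<in>{1,2,3,4}. f i j = g i j)"
  by (simp add: mk_def vec_eq_iff forall_4)

lemmas mkS = mk_mult mk_add mk_diff mk_scale mk_mat1 mk_zero munit_mk blk_mk
  E1_def E2_def E3_def E4_def

definition RotM :: "real \<Rightarrow> real \<Rightarrow> real^4^4" where
  "RotM \<sigma> c = mk (\<lambda>i j. if i=1\<and>j=1 then cos \<sigma> else if i=1\<and>j=2 then -sin \<sigma>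
     else if i=2\<and>j=1 then sin \<sigma> else if i=2\<and>j=2 then cos \<sigma> else if i=3\<and>j=3 then 1
     else if i=4\<and>j=4 then exp c else 0)"

lemma E4_facts: "E4 ** E4 = E4" "E3 ** E4 = 0" "E4 ** E3 = 0"
  by (simp_all add: mkS mk_eq_iff)

lemma E3_cube: "E3 ** (E3 ** E3) = -1 *\<^sub>R E3"
  by (simp add: mkS mk_eq_iff)

lemma rot: "mexp (\<sigma> *\<^sub>R E3 + c *\<^sub>R E4) = RotM \<sigma> c"
proof (cases "\<sigma> = 0")
  case True
  have "mexp (0 + c *\<^sub>R E4) = mat 1 + (exp c - 1) *\<^sub>R E4"
    using mexp_main[where Y="0::real^4^4" and s=1 and E=E4 and c=c] by (simp add: E4_facts)
  then show ?thesis using True by (simp add: RotM_def mkS mk_eq_iff)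
next
  case False
  have Y3: "(\<sigma> *\<^sub>R E3) ** ((\<sigma> *\<^sub>R E3) ** (\<sigma> *\<^sub>R E3)) = (-(\<sigma>^2)) *\<^sub>R (\<sigma> *\<^sub>R E3)"
    by (simp add: matrix_scalar_ac scalar_matrix_assoc[symmetric] E3_cube power2_eq_square)
  have "mexp (\<sigma> *\<^sub>R E3 + c *\<^sub>R E4) = mat 1 + (sin \<sigma> / \<sigma>) *\<^sub>R (\<sigma> *\<^sub>R E3)
     + ((1 - cos \<sigma>)/\<sigma>^2) *\<^sub>R ((\<sigma> *\<^sub>R E3) ** (\<sigma> *\<^sub>R E3)) + (exp c - 1) *\<^sub>R E4"
    by (rule mexp_main[OF Y3 False]) (simp_all add: E4_facts matrix_scalar_ac scalar_matrix_assoc[symmetric])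
  also have "\<dots> = mat 1 + sin \<sigma> *\<^sub>R E3 + (1 - cos \<sigma>) *\<^sub>R (E3 ** E3) + (exp c - 1) *\<^sub>R E4"
    using False by (simp add: matrix_scalar_ac scalar_matrix_assoc[symmetric] power2_eq_square)
  also have "\<dots> = RotM \<sigma> c"
    by (simp add: RotM_def mkS mk_eq_iff)
  finally show ?thesis .
qed

lemma expA:
  fixes a1 a2 a3 b t :: real
  assumes h: "a1^2 + a2^2 + a3^2 = 1" and wpos: "w2 a2 b > 0"
  defines "X \<equiv> a1 *\<^sub>R E1 + a3 *\<^sub>R E2 + b *\<^sub>R E3"
  shows "mexp (t *\<^sub>R (a1 *\<^sub>R e1 + a2 *\<^sub>R e2 + a3 *\<^sub>R e3 + b *\<^sub>R e4))
    = mat 1 + mu2 a2 b t *\<^sub>R X + nu2 a2 b t *\<^sub>R (X ** X) + (exp (t*a2) - 1) *\<^sub>R E4"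
proof -
  define w where "w = w2 a2 b"
  have arg: "t *\<^sub>R (a1 *\<^sub>R e1 + a2 *\<^sub>R e2 + a3 *\<^sub>R e3 + b *\<^sub>R e4) = t *\<^sub>R X + (t*a2) *\<^sub>R E4"
    by (simp add: X_def e1_def e2_def e3_def e4_def algebra_simps)
  have X3: "X ** (X ** X) = (-(a1^2+a3^2+b^2)) *\<^sub>R X"
    by (simp add: X_def mkS mk_eq_iff power2_eq_square algebra_simps)
  have ww: "w^2 = a1^2+a3^2+b^2"
  proof -
    have "1 - a2^2 + b^2 = a1^2+a3^2+b^2" using h by simp
    moreover have "0 \<le> a1^2+a3^2+b^2" by simp
    ultimately show ?thesis unfolding w_def w2_def by simp
  qed
  have XE: "X ** E4 = 0" "E4 ** X = 0" by (simp_all add: X_def mkS mk_eq_iff)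
  have w0: "w \<noteq> 0" using wpos w_def by simp
  show ?thesis
  proof (cases "t = 0")
    case True
    have "mexp (0 + 0 *\<^sub>R E4) = mat 1 + (exp 0 - 1) *\<^sub>R E4"
      using mexp_main[where Y="0::real^4^4" and s=1 and E=E4 and c=0] by (simp add: E4_facts)
    then show ?thesis using True by (simp add: mu2_def nu2_def)
  next
    case False
    have s0: "w * t \<noteq> 0" using False w0 by simp
    have Y3: "(t *\<^sub>R X) ** ((t *\<^sub>R X) ** (t *\<^sub>R X)) = (-((w*t)^2)) *\<^sub>R (t *\<^sub>R X)"
    proof -
      have wt: "(w*t)^2 = t^2*(a1^2+a3^2+b^2)" by (simp add: power_mult_distrib ww)
      have "(t *\<^sub>R X) ** ((t *\<^sub>R X) ** (t *\<^sub>R X)) = (t*(t*t)) *\<^sub>R (X ** (X**X))"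
        by (simp add: matrix_scalar_ac scalar_matrix_assoc[symmetric])
      also have "\<dots> = (t*(t*t)*(-(a1^2+a3^2+b^2))) *\<^sub>R X" by (simp add: X3)
      also have "t*(t*t)*(-(a1^2+a3^2+b^2)) = -((w*t)^2) * t"
        unfolding wt by (simp add: power2_eq_square algebra_simps)
      finally show ?thesis by simp
    qed
    have "mexp (t *\<^sub>R X + (t*a2) *\<^sub>R E4) = mat 1 + (sin (w*t) / (w*t)) *\<^sub>R (t *\<^sub>R X)
       + ((1 - cos (w*t))/(w*t)^2) *\<^sub>R ((t *\<^sub>R X) ** (t *\<^sub>R X)) + (exp (t*a2) - 1) *\<^sub>R E4"
      by (rule mexp_main[OF Y3 s0]) (simp_all add: E4_facts XE matrix_scalar_ac scalar_matrix_assoc[symmetric])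
    also have "\<dots> = mat 1 + mu2 a2 b t *\<^sub>R X + nu2 a2 b t *\<^sub>R (X ** X) + (exp (t*a2) - 1) *\<^sub>R E4"
      using False w0 by (simp add: mu2_def nu2_def w_def[symmetric] matrix_scalar_ac
          scalar_matrix_assoc[symmetric] power2_eq_square)
    finally show ?thesis using arg by simp
  qed
qed

theorem theorem7:
  fixes a1 a2 a3 b :: real
  assumes "a1^2 + a2^2 + a3^2 = 1"
  shows "(a2 \<noteq> 1 \<and> a2 \<noteq> -1 \<longrightarrow>
            (\<forall>t. gamma2 a1 a2 a3 b t = blk (Cmat a1 a2 a3 b t) (a2 * t)))
       \<and> (a2 = 1 \<or> a2 = -1 \<longrightarrow>
            (\<forall>t. gamma2 a1 a2 a3 b t = blk Id3 (a2 * t)))"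
proof (intro conjI impI allI)
  fix t
  assume a: "a2 \<noteq> 1 \<and> a2 \<noteq> -1"
  have "a2^2 \<le> 1" using assms by (smt (verit) zero_le_power2)
  moreover have "a2^2 \<noteq> 1" using a by (simp add: power2_eq_1_iff)
  ultimately have "a2^2 < 1" by simp
  then have wpos: "w2 a2 b > 0" unfolding w2_def by (simp add: add_pos_nonneg)
  have r: "mexp ((- t * b) *\<^sub>R e4) = RotM (-(t*b)) 0"
    using rot[of "-(t*b)" 0] by (simp add: e4_def)
  show "gamma2 a1 a2 a3 b t = blk (Cmat a1 a2 a3 b t) (a2 * t)"
    unfolding gamma2_def expA[OF assms wpos] r
    by (simp add: RotM_def mkS mk_eq_iff Cmat_def Let_def algebra_simps power2_eq_square)
next
  fix t
  assume a: "a2 = 1 \<or> a2 = -1"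
  then have "a2^2 = 1" by auto
  then have "a1^2 + a3^2 = 0" using assms by simp
  then have z: "a1 = 0" "a3 = 0" by (simp_all add: sum_power2_eq_zero_iff)
  have l: "t *\<^sub>R (a1 *\<^sub>R e1 + a2 *\<^sub>R e2 + a3 *\<^sub>R e3 + b *\<^sub>R e4) = (t*b) *\<^sub>R E3 + (t*a2) *\<^sub>R E4"
    by (simp add: z e2_def e4_def algebra_simps)
  have r: "mexp ((- t * b) *\<^sub>R e4) = RotM (-(t*b)) 0"
    using rot[of "-(t*b)" 0] by (simp add: e4_def)
  show "gamma2 a1 a2 a3 b t = blk Id3 (a2 * t)"
    unfolding gamma2_def l rot r
    by (simp add: RotM_def mkS mk_eq_iff Id3_def algebra_simps)
qed

end
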